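(* Suppose $G$ admits a presentation $\langle Z\mid S\rangle$ with all relators of length at most $M$ and satisfying a linear isoperimetric inequality with constant $L$. Then for every $K$ there exist $r$ and $0<\epsilon\le1$ such that the following holds: if $p$ is a geodesic in $\Gamma(G,Z)$, $p_0$ is a subpath of $p$ with $\ell(p_0)>2r$, and $q$ is a path in $\Gamma(G,Z)$ with the same endpoints as $p$ and $\ell(q)\le K\ell(p_0)$, then at least $\epsilon\ell(p_0)$ vertices of $p_0$ lie at distance at most $r$ from points of $q$.
   Context: $\Gamma(G,Z)$ is the Cayley graph with respect to the generating set $Z$ (closed under inverses), with its path metric. The linear isoperimetric inequality with constant $L$ means that every word over $Z$ representing the identity of length $n$ is a product of at most $Ln$ conjugates of relators and their inverses. *)

theory Defs
  imports Complex_Main "HOL-Algebra.Generated_Groups"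
begin

definition word_eval :: "('g, 'b) monoid_scheme \<Rightarrow> 'g list \<Rightarrow> 'g" where
  "word_eval G w = foldr (\<lambda>x y. x \<otimes>\<^bsub>G\<^esub> y) w \<one>\<^bsub>G\<^esub>"

definition inv_word :: "('g, 'b) monoid_scheme \<Rightarrow> 'g list \<Rightarrow> 'g list" where
  "inv_word G w = rev (map (\<lambda>x. inv\<^bsub>G\<^esub> x) w)"

inductive free_red :: "('g, 'b) monoid_scheme \<Rightarrow> 'g set \<Rightarrow> 'g list \<Rightarrow> 'g list \<Rightarrow> bool"
  for G Z where
  "z \<in> Z \<Longrightarrow> free_red G Z (xs @ [z, inv\<^bsub>G\<^esub> z] @ ys) (xs @ ys)"

text \<open>Equality in the free group on Z (with the involution z \<mapsto> z^-1).\<close>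
definition free_eq :: "('g, 'b) monoid_scheme \<Rightarrow> 'g set \<Rightarrow> 'g list \<Rightarrow> 'g list \<Rightarrow> bool" where
  "free_eq G Z = (symclp (free_red G Z))\<^sup>*\<^sup>*"

definition conj_factor :: "('g, 'b) monoid_scheme \<Rightarrow> 'g list \<times> 'g list \<times> bool \<Rightarrow> 'g list" where
  "conj_factor G f = (case f of (u, r, e) \<Rightarrow>
      u @ (if e then r else inv_word G r) @ inv_word G u)"

definition linear_isoperimetric ::
  "('g, 'b) monoid_scheme \<Rightarrow> 'g set \<Rightarrow> 'g list set \<Rightarrow> real \<Rightarrow> bool" where
  "linear_isoperimetric G Z S L \<longleftrightarrow>
     (\<forall>w. set w \<subseteq> Z \<and> word_eval G w = \<one>\<^bsub>G\<^esub> \<longrightarrow>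
        (\<exists>fs. (\<forall>(u, r, e) \<in> set fs. set u \<subseteq> Z \<and> r \<in> S) \<and>
              real (length fs) \<le> L * real (length w) \<and>
              free_eq G Z w (concat (map (conj_factor G) fs))))"

definition cay_dist :: "('g, 'b) monoid_scheme \<Rightarrow> 'g set \<Rightarrow> 'g \<Rightarrow> 'g \<Rightarrow> nat" where
  "cay_dist G Z g h = (LEAST n. \<exists>w. set w \<subseteq> Z \<and> length w = n \<and> g \<otimes>\<^bsub>G\<^esub> word_eval G w = h)"

text \<open>A (combinatorial) path in the Cayley graph, given by its list of vertices;
  its length is the number of edges, i.e. length of the list minus one.\<close>
definition cay_path :: "('g, 'b) monoid_scheme \<Rightarrow> 'g set \<Rightarrow> 'g list \<Rightarrow> bool" where
  "cay_path G Z vs \<longleftrightarrow> vs \<noteq> [] \<and> set vs \<subseteq> carrier G \<and>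
     (\<forall>i. Suc i < length vs \<longrightarrow> inv\<^bsub>G\<^esub> (vs ! i) \<otimes>\<^bsub>G\<^esub> (vs ! Suc i) \<in> Z)"

definition path_len :: "'g list \<Rightarrow> nat" where
  "path_len vs = length vs - 1"

definition cay_geodesic :: "('g, 'b) monoid_scheme \<Rightarrow> 'g set \<Rightarrow> 'g list \<Rightarrow> bool" where
  "cay_geodesic G Z vs \<longleftrightarrow> cay_path G Z vs \<and> path_len vs = cay_dist G Z (hd vs) (last vs)"

end

theory Submission
  imports Defs
begin

definition om :: "('g \<Rightarrow> real) \<Rightarrow> ('g \<Rightarrow> real) \<Rightarrow> 'g \<Rightarrow> 'g \<Rightarrow> real" where
  "om g h x y = (g x + g y) / 2 * (h y - h x)"

lemma om_anti: "om g h x y = - om g h y x"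
proof -
  have "h y - h x = -(h x - h y)" by simp
  then show ?thesis unfolding om_def by (simp add: add.commute right_diff_distrib)
qed

fun II :: "('g, 'b) monoid_scheme \<Rightarrow> ('g \<Rightarrow> real) \<Rightarrow> ('g \<Rightarrow> real) \<Rightarrow> 'g \<Rightarrow> 'g list \<Rightarrow> real" where
  "II G g h x [] = 0"
| "II G g h x (z # w) = om g h x (x \<otimes>\<^bsub>G\<^esub> z) + II G g h (x \<otimes>\<^bsub>G\<^esub> z) w"

fun lab :: "('g, 'b) monoid_scheme \<Rightarrow> 'g list \<Rightarrow> 'g list" where
  "lab G (v # u # vs) = (inv\<^bsub>G\<^esub> v \<otimes>\<^bsub>G\<^esub> u) # lab G (u # vs)"
| "lab G _ = []"

lemma word_eval_Nil[simp]: "word_eval G [] = \<one>\<^bsub>G\<^esub>"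
  by (simp add: word_eval_def)
lemma word_eval_Cons[simp]: "word_eval G (z # w) = z \<otimes>\<^bsub>G\<^esub> word_eval G w"
  by (simp add: word_eval_def)

context group
begin

lemma ev_closed[simp]: "set w \<subseteq> carrier G \<Longrightarrow> word_eval G w \<in> carrier G"
  by (induct w) auto

lemma ev_append: "set w1 \<subseteq> carrier G \<Longrightarrow> set w2 \<subseteq> carrier G \<Longrightarrow>
  word_eval G (w1 @ w2) = word_eval G w1 \<otimes> word_eval G w2"
  by (induct w1) (auto simp: m_assoc)

lemma inv_word_Cons: "inv_word G (z # u) = inv_word G u @ [inv z]"
  by (simp add: inv_word_def)

lemma inv_word_set: "set u \<subseteq> carrier G \<Longrightarrow> set (inv_word G u) \<subseteq> carrier G"
  by (auto simp: inv_word_def)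

lemma inv_word_setZ: "\<forall>z\<in>Z. inv z \<in> Z \<Longrightarrow> set u \<subseteq> Z \<Longrightarrow> set (inv_word G u) \<subseteq> Z"
  by (auto simp: inv_word_def)

lemma ev_inv_word: "set u \<subseteq> carrier G \<Longrightarrow> word_eval G u \<otimes> word_eval G (inv_word G u) = \<one>"
proof (induct u)
  case Nil then show ?case by (simp add: inv_word_def)
next
  case (Cons z u)
  have s: "set (inv_word G u) \<subseteq> carrier G" using Cons inv_word_set by auto
  have A: "word_eval G (inv_word G (z # u)) = word_eval G (inv_word G u) \<otimes> inv z"
    using Cons s by (simp add: inv_word_Cons ev_append)
  have "word_eval G (z # u) \<otimes> word_eval G (inv_word G (z # u))
     = z \<otimes> (word_eval G u \<otimes> word_eval G (inv_word G u)) \<otimes> inv z"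
    using A s Cons(2) by (simp add: m_assoc)
  also have "\<dots> = \<one>"
  proof -
    have IH: "word_eval G u \<otimes> word_eval G (inv_word G u) = \<one>" using Cons by auto
    have zc: "z \<in> carrier G" using Cons by auto
    show ?thesis by (simp only: IH) (simp add: zc)
  qed
  finally show ?case .
qed

lemma II_append: "x \<in> carrier G \<Longrightarrow> set w1 \<subseteq> carrier G \<Longrightarrow>
   II G g h x (w1 @ w2) = II G g h x w1 + II G g h (x \<otimes> word_eval G w1) w2"
  by (induct w1 arbitrary: x) (auto simp: m_assoc)

lemma II_inv_word: "x \<in> carrier G \<Longrightarrow> set u \<subseteq> carrier G \<Longrightarrow>
   II G g h (x \<otimes> word_eval G u) (inv_word G u) = - II G g h x u"
proof (induct u arbitrary: x)
  case Nil then show ?case by (simp add: inv_word_def)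
next
  case (Cons z u)
  have zc: "z \<in> carrier G" and uc: "set u \<subseteq> carrier G" using Cons by auto
  have s: "set (inv_word G u) \<subseteq> carrier G" using uc inv_word_set by auto
  define y where "y = x \<otimes> z \<otimes> word_eval G u"
  have yc: "y \<in> carrier G" using Cons zc uc by (simp add: y_def)
  have e1: "x \<otimes> word_eval G (z # u) = y" using Cons zc uc by (simp add: y_def m_assoc)
  have e2: "y \<otimes> word_eval G (inv_word G u) = x \<otimes> z"
    using Cons zc uc s ev_inv_word[OF uc] by (simp add: y_def m_assoc)
  have "II G g h (x \<otimes> word_eval G (z # u)) (inv_word G (z # u))
      = II G g h y (inv_word G u) + II G g h (x \<otimes> z) [inv z]"
    using e1 e2 yc s by (simp add: inv_word_Cons II_append)
  also have "II G g h y (inv_word G u) = - II G g h (x \<otimes> z) u"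
    using Cons(1)[of "x \<otimes> z"] Cons(2) zc uc by (simp add: y_def)
  also have "II G g h (x \<otimes> z) [inv z] = om g h (x \<otimes> z) x"
    using Cons(2) zc by (simp add: m_assoc)
  finally show ?case using om_anti[of g h x "x \<otimes> z"] by simp
qed

lemma free_red_inv:
  assumes "free_red G Z a b" "Z \<subseteq> carrier G" "\<forall>z\<in>Z. inv z \<in> Z"
  shows "(set a \<subseteq> carrier G \<longleftrightarrow> set b \<subseteq> carrier G) \<and>
    (set a \<subseteq> carrier G \<longrightarrow> (\<forall>x\<in>carrier G. II G g h x a = II G g h x b))"
  using assms(1)
proof cases
  case (1 z xs ys)
  have zc: "z \<in> carrier G" "inv z \<in> carrier G" using 1 assms by auto
  have "set xs \<subseteq> carrier G \<Longrightarrow> x \<in> carrier G \<Longrightarrow>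
      II G g h x (xs @ [z, inv z] @ ys) = II G g h x (xs @ ys)" for x
  proof -
    assume xs: "set xs \<subseteq> carrier G" and x: "x \<in> carrier G"
    define y where "y = x \<otimes> word_eval G xs"
    have yc: "y \<in> carrier G" using xs x by (simp add: y_def)
    have "II G g h x (xs @ [z, inv z] @ ys) = II G g h x xs + II G g h y ([z, inv z] @ ys)"
      using II_append[OF x xs] y_def by simp
    also have "II G g h y ([z, inv z] @ ys) = II G g h y ys"
      using yc zc om_anti[of g h y "y \<otimes> z"] by (simp add: m_assoc)
    finally show ?thesis using II_append[OF x xs] y_def by simp
  qed
  then show ?thesis using 1 zc by auto
qed

lemma free_eq_inv:
  assumes "free_eq G Z a b" "Z \<subseteq> carrier G" "\<forall>z\<in>Z. inv z \<in> Z" "set a \<subseteq> carrier G"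
  shows "set b \<subseteq> carrier G \<and> (\<forall>x\<in>carrier G. II G g h x a = II G g h x b)"
  using assms(1)[unfolded free_eq_def] assms(4)
proof (induct rule: rtranclp_induct)
  case base then show ?case by simp
next
  case (step b c)
  then have bc: "set b \<subseteq> carrier G" "\<forall>x\<in>carrier G. II G g h x a = II G g h x b" by auto
  from step(2) show ?case
  proof (cases rule: symclpE)
    assume "free_red G Z b c"
    from free_red_inv[OF this assms(2,3), of g h] bc show ?thesis by auto
  next
    assume "free_red G Z c b"
    from free_red_inv[OF this assms(2,3), of g h] bc show ?thesis by auto
  qed
qed

end

lemma prod_bound: "\<bar>a::real\<bar> \<le> 1 \<Longrightarrow> \<bar>b\<bar> \<le> c \<Longrightarrow> \<bar>a * b\<bar> \<le> c"
proof -
  assume "\<bar>a\<bar> \<le> 1" "\<bar>b\<bar> \<le> c"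
  then have "\<bar>a\<bar> * \<bar>b\<bar> \<le> 1 * c" by (intro mult_mono) auto
  then show ?thesis by (simp add: abs_mult)
qed

context group
begin

lemma II_bound:
  assumes Lg: "\<forall>x\<in>carrier G. \<forall>z\<in>Z. \<bar>g (x \<otimes> z) - g x\<bar> \<le> 1"
    and Lh: "\<forall>x\<in>carrier G. \<forall>z\<in>Z. \<bar>h (x \<otimes> z) - h x\<bar> \<le> 1"
    and Zc: "Z \<subseteq> carrier G"
  shows "x \<in> carrier G \<Longrightarrow> set w \<subseteq> Z \<Longrightarrow>
    \<bar>h (x \<otimes> word_eval G w) - h x\<bar> \<le> real (length w) \<and>
    \<bar>II G g h x w - g x * (h (x \<otimes> word_eval G w) - h x)\<bar> \<le> (real (length w))^2"
proof (induct w arbitrary: x)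
  case Nil then show ?case by simp
next
  case (Cons z w)
  have zc: "z \<in> carrier G" "z \<in> Z" and wZ: "set w \<subseteq> Z" using Cons Zc by auto
  have wc: "set w \<subseteq> carrier G" using wZ Zc by auto
  define y where "y = x \<otimes> z"
  have yc: "y \<in> carrier G" using Cons zc by (simp add: y_def)
  define e where "e = y \<otimes> word_eval G w"
  have ee: "x \<otimes> word_eval G (z # w) = e" using Cons zc wc by (simp add: e_def y_def m_assoc)
  have IH: "\<bar>h e - h y\<bar> \<le> real (length w)"
     "\<bar>II G g h y w - g y * (h e - h y)\<bar> \<le> (real (length w))^2"
    using Cons(1)[OF yc wZ] by (auto simp: e_def)
  have A: "\<bar>g y - g x\<bar> \<le> 1" "\<bar>h y - h x\<bar> \<le> 1" using Lg Lh Cons(2) zc by (auto simp: y_def)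
  have II: "II G g h x (z # w) = om g h x y + II G g h y w" by (simp add: y_def)
  have id: "om g h x y + II G g h y w - g x * (h e - h x) =
     (g y - g x) / 2 * (h y - h x) + (II G g h y w - g y * (h e - h y)) + (g y - g x) * (h e - h y)"
    unfolding om_def by (simp add: field_simps)
  have b1: "\<bar>(g y - g x) / 2 * (h y - h x)\<bar> \<le> 1/2"
  proof -
    have "\<bar>(g y - g x) * (h y - h x)\<bar> \<le> 1" using prod_bound[OF A(1) A(2)] .
    then show ?thesis by (simp add: abs_mult)
  qed
  have b2: "\<bar>(g y - g x) * (h e - h y)\<bar> \<le> real (length w)" using prod_bound[OF A(1) IH(1)] .
  have "\<bar>II G g h x (z # w) - g x * (h e - h x)\<bar> \<le> 1/2 + (real (length w))^2 + real (length w)"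
    using II id b1 b2 IH(2) by linarith
  also have "\<dots> \<le> (real (length (z # w)))^2" by (simp add: power2_eq_square algebra_simps)
  finally have 2: "\<bar>II G g h x (z # w) - g x * (h e - h x)\<bar> \<le> (real (length (z # w)))^2" .
  have 1: "\<bar>h e - h x\<bar> \<le> real (length (z # w))" using IH(1) A(2) by simp
  show ?case using 1 2 ee by simp
qed

lemma conj_factor_props:
  assumes Lg: "\<forall>x\<in>carrier G. \<forall>z\<in>Z. \<bar>g (x \<otimes> z) - g x\<bar> \<le> 1"
    and Lh: "\<forall>x\<in>carrier G. \<forall>z\<in>Z. \<bar>h (x \<otimes> z) - h x\<bar> \<le> 1"
    and Zc: "Z \<subseteq> carrier G"
    and S: "\<forall>s\<in>S. set s \<subseteq> Z \<and> word_eval G s = \<one>" "\<forall>s\<in>S. length s \<le> M"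
    and f: "set u \<subseteq> Z" "r \<in> S" and x: "x \<in> carrier G"
  shows "set (conj_factor G (u, r, e)) \<subseteq> carrier G \<and> word_eval G (conj_factor G (u, r, e)) = \<one>
    \<and> \<bar>II G g h x (conj_factor G (u, r, e))\<bar> \<le> (real M)^2"
proof -
  have uc: "set u \<subseteq> carrier G" using f Zc by auto
  have rZ: "set r \<subseteq> Z" and r1: "word_eval G r = \<one>" and rM: "length r \<le> M" using S f by auto
  have rc: "set r \<subseteq> carrier G" using rZ Zc by auto
  define y where "y = x \<otimes> word_eval G u"
  have yc: "y \<in> carrier G" using x uc by (simp add: y_def)
  have rb: "\<bar>II G g h y r\<bar> \<le> (real M)^2"
  proof -
    have "\<bar>II G g h y r\<bar> \<le> (real (length r))^2"
      using II_bound[OF Lg Lh Zc yc rZ] r1 yc by simp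
    also have "\<dots> \<le> (real M)^2" using rM by simp
    finally show ?thesis .
  qed
  have ir1: "word_eval G (inv_word G r) = \<one>"
    using ev_inv_word[OF rc] r1 inv_word_set[OF rc] by simp
  define mid where "mid = (if e then r else inv_word G r)"
  have midc: "set mid \<subseteq> carrier G" using rc inv_word_set[OF rc] by (simp add: mid_def)
  have mid1: "word_eval G mid = \<one>" using r1 ir1 by (simp add: mid_def)
  have midb: "\<bar>II G g h y mid\<bar> \<le> (real M)^2"
  proof (cases e)
    case True then show ?thesis using rb by (simp add: mid_def)
  next
    case False
    have "II G g h (y \<otimes> word_eval G r) (inv_word G r) = - II G g h y r"
      using II_inv_word[OF yc rc] .
    then show ?thesis using False rb r1 yc by (simp add: mid_def)
  qed
  have cf: "conj_factor G (u, r, e) = u @ mid @ inv_word G u"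
    by (simp add: conj_factor_def mid_def)
  have iuc: "set (inv_word G u) \<subseteq> carrier G" using inv_word_set[OF uc] .
  have ev: "word_eval G (conj_factor G (u, r, e)) = \<one>"
    using cf uc midc iuc mid1 ev_inv_word[OF uc] by (simp add: ev_append)
  have "II G g h x (conj_factor G (u, r, e)) = II G g h x u + II G g h y mid
      + II G g h (y \<otimes> word_eval G mid) (inv_word G u)"
    using cf x uc midc yc by (simp add: II_append ev_append y_def m_assoc)
  also have "II G g h (y \<otimes> word_eval G mid) (inv_word G u) = - II G g h x u"
    using mid1 yc II_inv_word[OF x uc] by (simp add: y_def)
  finally have "II G g h x (conj_factor G (u, r, e)) = II G g h y mid" by simp
  then show ?thesis using cf uc midc iuc ev midb by auto
qed

lemma concat_props:
  assumes Lg: "\<forall>x\<in>carrier G. \<forall>z\<in>Z. \<bar>g (x \<otimes> z) - g x\<bar> \<le> 1"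
    and Lh: "\<forall>x\<in>carrier G. \<forall>z\<in>Z. \<bar>h (x \<otimes> z) - h x\<bar> \<le> 1"
    and Zc: "Z \<subseteq> carrier G"
    and S: "\<forall>s\<in>S. set s \<subseteq> Z \<and> word_eval G s = \<one>" "\<forall>s\<in>S. length s \<le> M"
  shows "(\<forall>(u, r, e) \<in> set fs. set u \<subseteq> Z \<and> r \<in> S) \<Longrightarrow> x \<in> carrier G \<Longrightarrow>
    set (concat (map (conj_factor G) fs)) \<subseteq> carrier G \<and>
    word_eval G (concat (map (conj_factor G) fs)) = \<one> \<and>
    \<bar>II G g h x (concat (map (conj_factor G) fs))\<bar> \<le> real (length fs) * (real M)^2"
proof (induct fs)
  case Nil then show ?case by simp
next
  case (Cons f fs)
  obtain u r e where fe: "f = (u, r, e)" by (cases f) auto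
  have fu: "set u \<subseteq> Z" "r \<in> S" using Cons(2) fe by auto
  note P = conj_factor_props[OF Lg Lh Zc S fu Cons(3), of e]
  note IH = Cons(1)[OF _ Cons(3)]
  have IH': "set (concat (map (conj_factor G) fs)) \<subseteq> carrier G \<and>
    word_eval G (concat (map (conj_factor G) fs)) = \<one> \<and>
    \<bar>II G g h x (concat (map (conj_factor G) fs))\<bar> \<le> real (length fs) * (real M)^2"
    using IH Cons(2) by auto
  have "II G g h x (concat (map (conj_factor G) (f # fs))) =
     II G g h x (conj_factor G (u, r, e)) + II G g h x (concat (map (conj_factor G) fs))"
    using II_append[OF Cons(3)] P fe Cons(3) by simp
  then have "\<bar>II G g h x (concat (map (conj_factor G) (f # fs)))\<bar> \<le> real (length (f # fs)) * (real M)^2"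
    using P IH' by (simp add: algebra_simps) linarith
  then show ?case using P IH' fe by (simp add: ev_append)
qed

end

context group
begin

lemma gen_word: "a \<in> generate G Z \<Longrightarrow> Z \<subseteq> carrier G \<Longrightarrow> \<forall>z\<in>Z. inv z \<in> Z \<Longrightarrow>
  \<exists>w. set w \<subseteq> Z \<and> word_eval G w = a"
proof (induct rule: generate.induct)
  case one then show ?case by (intro exI[of _ "[]"]) simp
next
  case (incl h) then show ?case by (intro exI[of _ "[h]"]) auto
next
  case (inv h) then show ?case by (intro exI[of _ "[inv h]"]) auto
next
  case (eng h1 h2)
  then obtain w1 w2 where "set w1 \<subseteq> Z" "word_eval G w1 = h1" "set w2 \<subseteq> Z" "word_eval G w2 = h2"
    by blast
  then show ?case using eng(5) by (intro exI[of _ "w1 @ w2"]) (auto simp: ev_append)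
qed

lemma dist_witness:
  assumes "Z \<subseteq> carrier G" "\<forall>z\<in>Z. inv z \<in> Z" "generate G Z = carrier G"
    "x \<in> carrier G" "y \<in> carrier G"
  shows "\<exists>w. set w \<subseteq> Z \<and> length w = cay_dist G Z x y \<and> x \<otimes> word_eval G w = y"
proof -
  have "inv x \<otimes> y \<in> generate G Z" using assms by simp
  then obtain w where w: "set w \<subseteq> Z" "word_eval G w = inv x \<otimes> y"
    using gen_word assms by blast
  have "x \<otimes> word_eval G w = y" using w assms by (simp add: m_assoc[symmetric])
  then have ex: "\<exists>n w. set w \<subseteq> Z \<and> length w = n \<and> x \<otimes> word_eval G w = y" using w by blast
  show ?thesis unfolding cay_dist_def by (rule LeastI_ex[OF ex])
qed

lemma dist_le: "set w \<subseteq> Z \<Longrightarrow> x \<otimes> word_eval G w = y \<Longrightarrow> cay_dist G Z x y \<le> length w"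
  unfolding cay_dist_def by (rule Least_le) blast

lemma dist_tri:
  assumes "Z \<subseteq> carrier G" "\<forall>z\<in>Z. inv z \<in> Z" "generate G Z = carrier G"
    "x \<in> carrier G" "y \<in> carrier G" "t \<in> carrier G"
  shows "cay_dist G Z x t \<le> cay_dist G Z x y + cay_dist G Z y t"
proof -
  obtain w1 where w1: "set w1 \<subseteq> Z" "length w1 = cay_dist G Z x y" "x \<otimes> word_eval G w1 = y"
    using dist_witness[OF assms(1-5)] by blast
  obtain w2 where w2: "set w2 \<subseteq> Z" "length w2 = cay_dist G Z y t" "y \<otimes> word_eval G w2 = t"
    using dist_witness[OF assms(1-3,5,6)] by blast
  have c: "set w1 \<subseteq> carrier G" "set w2 \<subseteq> carrier G" using w1 w2 assms(1) by auto
  have "x \<otimes> word_eval G (w1 @ w2) = t" using w1 w2 c assms by (simp add: ev_append m_assoc[symmetric])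
  then have "cay_dist G Z x t \<le> length (w1 @ w2)" using w1 w2 by (intro dist_le) auto
  then show ?thesis using w1 w2 by simp
qed

lemma dist_self: "x \<in> carrier G \<Longrightarrow> cay_dist G Z x x = 0"
  using dist_le[of "[]" Z x x] by simp

lemma dist_step:
  assumes "Z \<subseteq> carrier G" "\<forall>z\<in>Z. inv z \<in> Z" "x \<in> carrier G" "z \<in> Z"
  shows "cay_dist G Z x (x \<otimes> z) \<le> 1" "cay_dist G Z (x \<otimes> z) x \<le> 1"
proof -
  have zc: "z \<in> carrier G" using assms by auto
  show "cay_dist G Z x (x \<otimes> z) \<le> 1" using dist_le[of "[z]" Z x "x \<otimes> z"] assms zc by simp
  have "(x \<otimes> z) \<otimes> word_eval G [inv z] = x" using assms zc by (simp add: m_assoc)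
  then show "cay_dist G Z (x \<otimes> z) x \<le> 1" using dist_le[of "[inv z]" Z "x \<otimes> z" x] assms by simp
qed

lemma dist_lip:
  assumes "Z \<subseteq> carrier G" "\<forall>z\<in>Z. inv z \<in> Z" "generate G Z = carrier G"
    "x \<in> carrier G" "z \<in> Z" "t \<in> carrier G"
  shows "\<bar>real (cay_dist G Z (x \<otimes> z) t) - real (cay_dist G Z x t)\<bar> \<le> 1"
    "\<bar>real (cay_dist G Z t (x \<otimes> z)) - real (cay_dist G Z t x)\<bar> \<le> 1"
proof -
  have xz: "x \<otimes> z \<in> carrier G" using assms by auto
  note s = dist_step[OF assms(1,2,4,5)]
  have "cay_dist G Z (x \<otimes> z) t \<le> cay_dist G Z (x \<otimes> z) x + cay_dist G Z x t"
    using dist_tri[OF assms(1-3) xz assms(4,6)] .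
  moreover have "cay_dist G Z x t \<le> cay_dist G Z x (x \<otimes> z) + cay_dist G Z (x \<otimes> z) t"
    using dist_tri[OF assms(1-3,4) xz assms(6)] .
  ultimately show "\<bar>real (cay_dist G Z (x \<otimes> z) t) - real (cay_dist G Z x t)\<bar> \<le> 1"
    using s by linarith
  have "cay_dist G Z t (x \<otimes> z) \<le> cay_dist G Z t x + cay_dist G Z x (x \<otimes> z)"
    using dist_tri[OF assms(1-3,6,4) xz] .
  moreover have "cay_dist G Z t x \<le> cay_dist G Z t (x \<otimes> z) + cay_dist G Z (x \<otimes> z) x"
    using dist_tri[OF assms(1-3,6) xz assms(4)] .
  ultimately show "\<bar>real (cay_dist G Z t (x \<otimes> z)) - real (cay_dist G Z t x)\<bar> \<le> 1"
    using s by linarith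
qed

lemma path_step:
  assumes "cay_path G Z vs" "Suc i < length vs"
  shows "vs ! Suc i = vs ! i \<otimes> (inv (vs ! i) \<otimes> vs ! Suc i)"
    "inv (vs ! i) \<otimes> vs ! Suc i \<in> Z"
proof -
  have c: "vs ! i \<in> carrier G" "vs ! Suc i \<in> carrier G"
    using assms unfolding cay_path_def by (auto simp: subset_iff)
  show "vs ! Suc i = vs ! i \<otimes> (inv (vs ! i) \<otimes> vs ! Suc i)"
    using c by (simp add: m_assoc[symmetric])
  show "inv (vs ! i) \<otimes> vs ! Suc i \<in> Z" using assms unfolding cay_path_def by auto
qed

lemma path_dist:
  assumes "Z \<subseteq> carrier G" "\<forall>z\<in>Z. inv z \<in> Z" "generate G Z = carrier G"
    "cay_path G Z vs" "i \<le> j" "j < length vs"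
  shows "cay_dist G Z (vs ! i) (vs ! j) \<le> j - i"
  using assms(5,6)
proof (induct j)
  case 0 then show ?case
    using dist_self assms(4) unfolding cay_path_def by (auto simp: subset_iff)
next
  case (Suc j)
  have c: "\<And>k. k < length vs \<Longrightarrow> vs ! k \<in> carrier G"
    using assms(4) unfolding cay_path_def by (auto simp: subset_iff)
  show ?case
  proof (cases "i = Suc j")
    case True then show ?thesis using dist_self c Suc by simp
  next
    case False
    then have ij: "i \<le> j" using Suc by simp
    note ps = path_step[OF assms(4) Suc(3)]
    have "cay_dist G Z (vs ! i) (vs ! Suc j) \<le> cay_dist G Z (vs ! i) (vs ! j) + cay_dist G Z (vs ! j) (vs ! Suc j)"
      using dist_tri[OF assms(1-3)] c Suc by simp
    moreover have "cay_dist G Z (vs ! j) (vs ! Suc j) \<le> 1"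
      using dist_step(1)[OF assms(1,2) c[of j] ps(2)] ps(1) Suc by simp
    moreover have "cay_dist G Z (vs ! i) (vs ! j) \<le> j - i" using Suc ij by simp
    ultimately show ?thesis using ij by linarith
  qed
qed

lemma lab_props:
  "Z \<subseteq> carrier G \<Longrightarrow> cay_path G Z vs \<Longrightarrow> set (lab G vs) \<subseteq> Z \<and> length (lab G vs) = length vs - 1 \<and>
    hd vs \<otimes> word_eval G (lab G vs) = last vs \<and>
    II G g h (hd vs) (lab G vs) = (\<Sum>i<length vs - 1. om g h (vs ! i) (vs ! Suc i))"
proof (induct vs)
  case Nil then show ?case by (simp add: cay_path_def)
next
  case (Cons v vs)
  show ?case
  proof (cases vs)
    case Nil then show ?thesis using Cons by (simp add: cay_path_def)
  next
    case (Cons u us)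
    have P: "cay_path G Z (v # u # us)" using Cons.prems(2) Cons by simp
    have P': "cay_path G Z (u # us)" using P unfolding cay_path_def
      by (auto simp del: nth_Cons_Suc)
    have IH: "set (lab G (u # us)) \<subseteq> Z \<and> length (lab G (u # us)) = length (u # us) - 1 \<and>
      u \<otimes> word_eval G (lab G (u # us)) = last (u # us) \<and>
      II G g h u (lab G (u # us)) = (\<Sum>i<length (u # us) - 1. om g h ((u # us) ! i) ((u # us) ! Suc i))"
      using Cons.hyps Cons.prems(1) P' Cons by simp
    have vc: "v \<in> carrier G" "u \<in> carrier G" using P unfolding cay_path_def by auto
    have a: "inv v \<otimes> u \<in> Z" using P unfolding cay_path_def by force
    have labc: "set (lab G (u # us)) \<subseteq> carrier G"
      using IH Cons.prems(1) by auto
    have vu: "v \<otimes> (inv v \<otimes> u) = u" using vc by (simp add: m_assoc[symmetric])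
    have ev: "v \<otimes> word_eval G (lab G (v # u # us)) = u \<otimes> word_eval G (lab G (u # us))"
      using vc labc by (simp add: m_assoc[symmetric] vu)
    have sum: "(\<Sum>i<length (v # u # us) - 1. om g h ((v # u # us) ! i) ((v # u # us) ! Suc i))
      = om g h v u + (\<Sum>i<length (u # us) - 1. om g h ((u # us) ! i) ((u # us) ! Suc i))"
    proof -
      have L: "length (v # u # us) - 1 = Suc (length (u # us) - 1)" by simp
      show ?thesis unfolding L sum.lessThan_Suc_shift by simp
    qed
    show ?thesis using IH a ev sum vu Cons by simp
  qed
qed

end

lemma min_lip: "(A::real) \<le> B + 1 \<Longrightarrow> B \<le> A + 1 \<Longrightarrow> \<bar>min R A - min R B\<bar> \<le> 1"
  by (simp add: min_def abs_le_iff)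

theorem lemma6p4:
  fixes G :: "('g, 'b) monoid_scheme" and Z :: "'g set" and S :: "'g list set"
    and M :: nat and L :: real
  assumes "group G"
    and "Z \<subseteq> carrier G" and "\<forall>z\<in>Z. inv\<^bsub>G\<^esub> z \<in> Z"
    and "generate G Z = carrier G"
    and "\<forall>s\<in>S. set s \<subseteq> Z \<and> word_eval G s = \<one>\<^bsub>G\<^esub>"
    and "\<forall>s\<in>S. length s \<le> M"
    and "linear_isoperimetric G Z S L"
  shows "\<forall>K::real. \<exists>(r::nat) (\<epsilon>::real). 0 < \<epsilon> \<and> \<epsilon> \<le> 1 \<and>
     (\<forall>p q a b. cay_geodesic G Z p \<and> a \<le> b \<and> b < length p \<and> b - a > 2 * r \<and>
        cay_path G Z q \<and> hd q = hd p \<and> last q = last p \<and>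
        real (path_len q) \<le> K * real (b - a) \<longrightarrow>
        \<epsilon> * real (b - a) \<le>
          real (card {i. a \<le> i \<and> i \<le> b \<and> (\<exists>j < length q. cay_dist G Z (p ! i) (q ! j) \<le> r)}))"
proof (intro allI)
  fix K :: real
  interpret group G by fact
  note Zc = assms(2) and Zi = assms(3) and gen = assms(4)
  define C where "C = \<bar>K\<bar> * \<bar>L\<bar> * (real M)^2"
  have C0: "C \<ge> 0" by (simp add: C_def)
  define r :: nat where "r = nat \<lceil>8 * C\<rceil> + 1"
  have rC: "8 * C \<le> real r" unfolding r_def by linarith
  have r0: "real r > 0" unfolding r_def by simp
  show "\<exists>(r::nat) (\<epsilon>::real). 0 < \<epsilon> \<and> \<epsilon> \<le> 1 \<and>
     (\<forall>p q a b. cay_geodesic G Z p \<and> a \<le> b \<and> b < length p \<and> b - a > 2 * r \<and>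
        cay_path G Z q \<and> hd q = hd p \<and> last q = last p \<and>
        real (path_len q) \<le> K * real (b - a) \<longrightarrow>
        \<epsilon> * real (b - a) \<le>
          real (card {i. a \<le> i \<and> i \<le> b \<and> (\<exists>j < length q. cay_dist G Z (p ! i) (q ! j) \<le> r)}))"
  proof (intro exI[of _ r] exI[of _ "1/2::real"] conjI allI impI)
    fix p q :: "'g list" and a b :: nat
    assume H: "cay_geodesic G Z p \<and> a \<le> b \<and> b < length p \<and> b - a > 2 * r \<and>
        cay_path G Z q \<and> hd q = hd p \<and> last q = last p \<and>
        real (path_len q) \<le> K * real (b - a)"
    have pP: "cay_path G Z p" and pg: "path_len p = cay_dist G Z (hd p) (last p)"
      using H unfolding cay_geodesic_def by auto
    have qP: "cay_path G Z q" and ab: "a \<le> b" "b < length p" and hq: "hd q = hd p" "last q = last p"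
      and Kq: "real (path_len q) \<le> K * real (b - a)" using H by auto
    define n where "n = length p - 1"
    define m where "m = b - a"
    have pne: "p \<noteq> []" and qne: "q \<noteq> []" using pP qP unfolding cay_path_def by auto
    have pc: "\<And>k. k < length p \<Longrightarrow> p ! k \<in> carrier G"
      using pP unfolding cay_path_def by (auto simp: subset_iff)
    have qc: "\<And>k. k < length q \<Longrightarrow> q ! k \<in> carrier G"
      using qP unfolding cay_path_def by (auto simp: subset_iff)
    define x0 where "x0 = hd p"
    have x0_eq: "x0 = p ! 0" using pne by (simp add: x0_def hd_conv_nth)
    have last_eq: "last p = p ! n" using pne by (simp add: n_def last_conv_nth)
    have x0c: "x0 \<in> carrier G" using pc pne x0_eq by auto
    have nlen: "n < length p" using pne by (simp add: n_def)
    have pn: "cay_dist G Z x0 (p ! n) = n" using pg by (simp add: path_len_def n_def x0_def last_eq)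
    have pk: "cay_dist G Z x0 (p ! k) = k" if "k \<le> n" for k
    proof -
      have "cay_dist G Z x0 (p ! k) \<le> k - 0" unfolding x0_eq
        using path_dist[OF Zc Zi gen pP, of 0 k] that nlen by simp
      moreover have "cay_dist G Z (p ! k) (p ! n) \<le> n - k"
        using path_dist[OF Zc Zi gen pP, of k n] that nlen by simp
      moreover have "n \<le> cay_dist G Z x0 (p ! k) + cay_dist G Z (p ! k) (p ! n)"
        using dist_tri[OF Zc Zi gen x0c pc[of k] pc[of n]] that nlen pn by simp
      ultimately show ?thesis using that by linarith
    qed
    have nq: "n \<le> path_len q"
    proof -
      have "cay_dist G Z (q ! 0) (q ! (length q - 1)) \<le> length q - 1 - 0"
        using path_dist[OF Zc Zi gen qP, of 0 "length q - 1"] qne by simp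
      moreover have "q ! 0 = x0" "q ! (length q - 1) = p ! n"
        using qne hq last_eq by (auto simp: x0_def hd_conv_nth last_conv_nth)
      ultimately show ?thesis using pn by (simp add: path_len_def)
    qed
    define dq where "dq x = Min ((\<lambda>j. cay_dist G Z x (q ! j)) ` {..<length q})" for x
    have dq_in: "\<exists>j<length q. dq x = cay_dist G Z x (q ! j)" for x
    proof -
      have "dq x \<in> (\<lambda>j. cay_dist G Z x (q ! j)) ` {..<length q}"
        unfolding dq_def using qne by (intro Min_in) auto
      then show ?thesis by auto
    qed
    have dq_le: "j < length q \<Longrightarrow> dq x \<le> cay_dist G Z x (q ! j)" for x j
      unfolding dq_def by (rule Min_le) auto
    define g where "g x = min (real r) (real (dq x))" for x
    define h where "h x = real (cay_dist G Z x0 x)" for x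
    have g0: "g x \<ge> 0" for x by (simp add: g_def)
    have Lg: "\<forall>x\<in>carrier G. \<forall>z\<in>Z. \<bar>g (x \<otimes>\<^bsub>G\<^esub> z) - g x\<bar> \<le> 1"
    proof (intro ballI)
      fix x z assume x: "x \<in> carrier G" and z: "z \<in> Z"
      note lip = dist_lip(1)[OF Zc Zi gen x z]
      obtain j where j: "j < length q" "dq x = cay_dist G Z x (q ! j)" using dq_in by blast
      obtain j' where j': "j' < length q" "dq (x \<otimes>\<^bsub>G\<^esub> z) = cay_dist G Z (x \<otimes>\<^bsub>G\<^esub> z) (q ! j')"
        using dq_in by blast
      have "real (dq (x \<otimes>\<^bsub>G\<^esub> z)) \<le> real (cay_dist G Z (x \<otimes>\<^bsub>G\<^esub> z) (q ! j))" using dq_le j(1) by simp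
      also have "\<dots> \<le> real (dq x) + 1" using lip[OF qc[OF j(1)]] j by simp
      finally have 1: "real (dq (x \<otimes>\<^bsub>G\<^esub> z)) \<le> real (dq x) + 1" .
      have "real (dq x) \<le> real (cay_dist G Z x (q ! j'))" using dq_le j'(1) by simp
      also have "\<dots> \<le> real (dq (x \<otimes>\<^bsub>G\<^esub> z)) + 1" using lip[OF qc[OF j'(1)]] j' by simp
      finally have 2: "real (dq x) \<le> real (dq (x \<otimes>\<^bsub>G\<^esub> z)) + 1" .
      show "\<bar>g (x \<otimes>\<^bsub>G\<^esub> z) - g x\<bar> \<le> 1" unfolding g_def using min_lip[OF 1 2] .
    qed
    have Lh: "\<forall>x\<in>carrier G. \<forall>z\<in>Z. \<bar>h (x \<otimes>\<^bsub>G\<^esub> z) - h x\<bar> \<le> 1"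
      unfolding h_def using dist_lip(2)[OF Zc Zi gen _ _ x0c] by blast
    have gq: "g (q ! j) = 0" if "j < length q" for j
    proof -
      have "dq (q ! j) = 0" using dq_le[OF that, of "q ! j"] dist_self[OF qc[OF that]] by simp
      then show ?thesis by (simp add: g_def)
    qed
    note lq = lab_props[OF Zc qP, of g h]
    note lp = lab_props[OF Zc pP, of g h]
    have Iq: "II G g h x0 (lab G q) = 0"
    proof -
      have "II G g h x0 (lab G q) = (\<Sum>i<length q - 1. om g h (q ! i) (q ! Suc i))"
        using lq hq by (simp add: x0_def)
      also have "\<dots> = 0" by (intro sum.neutral) (auto simp: om_def gq)
      finally show ?thesis .
    qed
    have Ip: "II G g h x0 (lab G p) = (\<Sum>i<n. (g (p ! i) + g (p ! Suc i)) / 2)"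
    proof -
      have "II G g h x0 (lab G p) = (\<Sum>i<n. om g h (p ! i) (p ! Suc i))"
        using lp by (simp add: x0_def n_def)
      also have "\<dots> = (\<Sum>i<n. (g (p ! i) + g (p ! Suc i)) / 2)"
      proof (intro sum.cong refl)
        fix i assume "i \<in> {..<n}"
        then have "i \<le> n" "Suc i \<le> n" by auto
        then show "om g h (p ! i) (p ! Suc i) = (g (p ! i) + g (p ! Suc i)) / 2"
          by (simp add: om_def h_def pk)
      qed
      finally show ?thesis .
    qed
    define w where "w = lab G q @ inv_word G (lab G p)"
    have lqc: "set (lab G q) \<subseteq> carrier G" and lpc: "set (lab G p) \<subseteq> carrier G"
      using lq lp Zc by auto
    have wZ: "set w \<subseteq> Z" using lq lp inv_word_setZ[OF Zi] by (simp add: w_def)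
    have wc: "set w \<subseteq> carrier G" using wZ Zc by auto
    have evq: "word_eval G (lab G q) = word_eval G (lab G p)"
    proof -
      have "x0 \<otimes>\<^bsub>G\<^esub> word_eval G (lab G q) = x0 \<otimes>\<^bsub>G\<^esub> word_eval G (lab G p)"
        using lq lp hq by (simp add: x0_def)
      then show ?thesis using x0c lqc lpc by simp
    qed
    have ew: "word_eval G w = \<one>\<^bsub>G\<^esub>"
      using evq ev_inv_word[OF lpc] lqc inv_word_set[OF lpc] by (simp add: w_def ev_append)
    obtain fs where fs: "\<forall>(u, r, e) \<in> set fs. set u \<subseteq> Z \<and> r \<in> S"
      "real (length fs) \<le> L * real (length w)"
      "free_eq G Z w (concat (map (conj_factor G) fs))"
      using assms(7) wZ ew unfolding linear_isoperimetric_def by blast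
    have Iw: "II G g h x0 w = - II G g h x0 (lab G p)"
    proof -
      have "II G g h x0 w = II G g h x0 (lab G q) + II G g h (x0 \<otimes>\<^bsub>G\<^esub> word_eval G (lab G p)) (inv_word G (lab G p))"
        using II_append[OF x0c lqc] evq by (simp add: w_def)
      then show ?thesis using Iq II_inv_word[OF x0c lpc] by simp
    qed
    have Iw2: "II G g h x0 w = II G g h x0 (concat (map (conj_factor G) fs))"
      using free_eq_inv[OF fs(3) Zc Zi wc, of g h] x0c by auto
    have cb: "\<bar>II G g h x0 (concat (map (conj_factor G) fs))\<bar> \<le> real (length fs) * (real M)^2"
      using concat_props[OF Lg Lh Zc assms(5,6) fs(1) x0c] by simp
    define Sm where "Sm = (\<Sum>i<n. (g (p ! i) + g (p ! Suc i)) / 2)"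
    have Sb: "Sm \<le> real (length fs) * (real M)^2" using Iw Iw2 Ip cb by (simp add: Sm_def)
    have lw: "real (length w) \<le> 2 * \<bar>K\<bar> * real m"
    proof -
      have "length w = path_len q + n"
        using lq lp by (simp add: w_def inv_word_def path_len_def n_def)
      then have "real (length w) \<le> 2 * real (path_len q)" using nq by simp
      also have "\<dots> \<le> 2 * (K * real m)" using Kq by (simp add: m_def)
      also have "\<dots> \<le> 2 * \<bar>K\<bar> * real m" by (simp add: mult_right_mono)
      finally show ?thesis .
    qed
    have lfs: "real (length fs) \<le> 2 * \<bar>K\<bar> * \<bar>L\<bar> * real m"
    proof -
      have "L * real (length w) \<le> \<bar>L\<bar> * real (length w)" by (simp add: mult_right_mono)
      also have "\<dots> \<le> \<bar>L\<bar> * (2 * \<bar>K\<bar> * real m)" using lw by (simp add: mult_left_mono)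
      finally show ?thesis using fs(2) by (simp add: algebra_simps)
    qed
    have Sb2: "Sm \<le> 2 * C * real m"
    proof -
      have "real (length fs) * (real M)^2 \<le> (2 * \<bar>K\<bar> * \<bar>L\<bar> * real m) * (real M)^2"
        using lfs by (simp add: mult_right_mono)
      then show ?thesis using Sb by (simp add: C_def algebra_simps)
    qed
    define F where "F = {i. a \<le> i \<and> i < b \<and> \<not> (\<exists>j < length q. cay_dist G Z (p ! i) (q ! j) \<le> r)}"
    define N where "N = {i. a \<le> i \<and> i \<le> b \<and> (\<exists>j < length q. cay_dist G Z (p ! i) (q ! j) \<le> r)}"
    have Fsub: "F \<subseteq> {..<n}" using ab by (auto simp: F_def n_def)
    have finF: "finite F" using Fsub finite_subset by blast
    have gF: "g (p ! i) = real r" if "i \<in> F" for i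
    proof -
      obtain j where "j < length q" "dq (p ! i) = cay_dist G Z (p ! i) (q ! j)" using dq_in by blast
      then have "dq (p ! i) > r" using that by (auto simp: F_def)
      then show ?thesis by (simp add: g_def)
    qed
    have "real (card F) * (real r / 2) = (\<Sum>i\<in>F. real r / 2)" by simp
    also have "\<dots> \<le> (\<Sum>i\<in>F. (g (p ! i) + g (p ! Suc i)) / 2)"
      by (intro sum_mono) (simp add: gF g0)
    also have "\<dots> \<le> Sm" unfolding Sm_def
      by (intro sum_mono2 Fsub) (auto simp: g0 add_nonneg_nonneg)
    finally have "real (card F) * (real r / 2) \<le> 2 * C * real m" using Sb2 by linarith
    then have "real (card F) * real r \<le> (4 * C) * real m" by simp
    also have "\<dots> \<le> (real r / 2) * real m" using rC by (intro mult_right_mono) auto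
    finally have "real (card F) * real r \<le> (real m / 2) * real r" by (simp add: algebra_simps)
    then have cF: "real (card F) \<le> real m / 2" using r0 by simp
    have "{a..<b} \<subseteq> N \<union> F" by (auto simp: N_def F_def)
    moreover have "finite N" by (rule finite_subset[of _ "{a..b}"]) (auto simp: N_def)
    ultimately have "card {a..<b} \<le> card N + card F"
      using finF by (meson card_Un_le card_mono finite_UnI le_trans)
    then have "real m \<le> real (card N) + real (card F)" by (simp add: m_def)
    then show "1 / 2 * real (b - a) \<le> real (card N)" using cF by (simp add: m_def)
  qed simp_all
qed

end
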